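(* Let $C>0$, let $l$ be a mostly horizontal inclined to the right line, and let $I$ be an image of width $w$. Then $N(I\cap s(l,C))\leqslant(2C\sqrt2+1)\,w$.
   Context: An image of width $w$ and height $h$ is identified with the set of integer points $(x,y)$, $x\in\{0,\dots,w-1\}$, $y\in\{0,\dots,h-1\}$. For a line $l$ and $C>0$, $s(l,C)=\{r\in\mathbb{R}^2\mid\rho(r,l)\leqslant C/2\}$, $\rho$ the Euclidean distance. A line is mostly horizontal inclined to the right if it has equation $y=ax+b$ with $0\leqslant a\leqslant1$. For $D\subseteq\mathbb{R}^2$, $N(D)=|\mathbb{Z}^2\cap D|$. *)

theory Defs
  imports "HOL-Analysis.Analysis"
begin

text \<open>The plane is modelled as real \<times> real, whose metric is the Euclidean one.\<close>

definition lattice :: "(real \<times> real) set" where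
  "lattice = {(of_int x, of_int y) | x y. True}"

definition image_pts :: "nat \<Rightarrow> nat \<Rightarrow> (real \<times> real) set" where
  "image_pts w h = {(of_int x, of_int y) | x y. 0 \<le> x \<and> x < int w \<and> 0 \<le> y \<and> y < int h}"

definition line_ab :: "real \<Rightarrow> real \<Rightarrow> (real \<times> real) set" where
  "line_ab a b = {(x, y). y = a * x + b}"

definition strip :: "(real \<times> real) set \<Rightarrow> real \<Rightarrow> (real \<times> real) set" where
  "strip l C = {r. infdist r l \<le> C / 2}"

definition N :: "(real \<times> real) set \<Rightarrow> nat" where
  "N D = card (lattice \<inter> D)"

end

theory Submission
  imports Defs
begin

lemma sum_abs_le_sqrt2: "\<bar>p\<bar> + \<bar>q::real\<bar> \<le> sqrt 2 * sqrt (p^2 + q^2)"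
proof -
  have "(\<bar>p\<bar> + \<bar>q\<bar>)^2 \<le> 2 * (p^2 + q^2)"
  proof -
    have "0 \<le> (\<bar>p\<bar> - \<bar>q\<bar>)^2" by simp
    thus ?thesis by (simp add: power2_eq_square algebra_simps)
  qed
  hence "\<bar>p\<bar> + \<bar>q\<bar> \<le> sqrt (2 * (p^2 + q^2))"
    by (simp add: real_le_rsqrt)
  thus ?thesis by (simp add: real_sqrt_mult[symmetric] algebra_simps)
qed

lemma vert_le:
  assumes "0 \<le> a" "a \<le> 1"
  shows "\<bar>y - a*x - b\<bar> \<le> sqrt 2 * infdist (x,y) (line_ab a b)"
proof -
  have ne: "line_ab a b \<noteq> {}" unfolding line_ab_def by auto
  have "\<bar>y - a*x - b\<bar> / sqrt 2 \<le> (INF p\<in>line_ab a b. dist (x,y) p)"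
  proof (rule cINF_greatest[OF ne])
    fix p assume "p \<in> line_ab a b"
    then obtain u v where p: "p = (u,v)" "v = a*u+b" unfolding line_ab_def by auto
    have "\<bar>y - a*x - b\<bar> = \<bar>(y - v) + a*(u - x)\<bar>" using p by (simp add: algebra_simps)
    also have "\<dots> \<le> \<bar>y-v\<bar> + a*\<bar>u-x\<bar>" using assms abs_triangle_ineq[of "y-v" "a*(u-x)"] by (simp add: abs_mult)
    also have "\<dots> \<le> \<bar>x-u\<bar> + \<bar>y-v\<bar>"
    proof -
      have "a*\<bar>u-x\<bar> \<le> 1*\<bar>u-x\<bar>" using assms by (intro mult_right_mono) auto
      thus ?thesis by (simp add: abs_minus_commute)
    qed
    also have "\<dots> \<le> sqrt 2 * dist (x,y) p" using sum_abs_le_sqrt2[of "x-u" "y-v"]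
      by (simp add: p dist_Pair_Pair dist_real_def)
    finally show "\<bar>y - a*x - b\<bar> / sqrt 2 \<le> dist (x,y) p" by (simp add: divide_simps mult.commute)
  qed
  thus ?thesis using infdist_notempty[OF ne] by (simp add: divide_simps mult.commute)
qed

lemma card_int_interval:
  assumes "K \<ge> 0" shows "real (card {\<lceil>c - K\<rceil>..\<lfloor>c + K::real\<rfloor>}) \<le> 2*K + 1"
proof (cases "\<lceil>c - K\<rceil> \<le> \<lfloor>c + K\<rfloor>")
  case True
  have "real (card {\<lceil>c - K\<rceil>..\<lfloor>c + K\<rfloor>}) = real_of_int (\<lfloor>c + K\<rfloor> - \<lceil>c - K\<rceil> + 1)"
    using True by simp
  also have "\<dots> \<le> 2*K+1" using of_int_floor_le[of "c+K"] le_of_int_ceiling[of "c-K"] by linarith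
  finally show ?thesis .
next
  case False
  thus ?thesis using assms by simp
qed

theorem proposition13:
  fixes C a b :: real and w h :: nat
  assumes "C > 0" and "0 \<le> a" and "a \<le> 1"
  shows "real (N (image_pts w h \<inter> strip (line_ab a b) C)) \<le> (2 * C * sqrt 2 + 1) * real w"
proof -
  define K where "K = C * sqrt 2 / 2"
  define S where "S x = (\<lambda>y. (real_of_int x, real_of_int y)) ` {\<lceil>a*x + b - K\<rceil>..\<lfloor>a*x + b + K\<rfloor>}" for x :: int
  have sub: "lattice \<inter> (image_pts w h \<inter> strip (line_ab a b) C) \<subseteq> (\<Union>x\<in>{0..<int w}. S x)"
  proof
    fix p assume p: "p \<in> lattice \<inter> (image_pts w h \<inter> strip (line_ab a b) C)"
    then obtain x y :: int where xy: "p = (of_int x, of_int y)" "0 \<le> x" "x < int w"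
      unfolding image_pts_def by auto
    have "infdist p (line_ab a b) \<le> C/2" using p unfolding strip_def by auto
    hence "\<bar>y - a*x - b\<bar> \<le> sqrt 2 * (C/2)"
      proof -
      have "sqrt 2 * infdist p (line_ab a b) \<le> sqrt 2 * (C/2)"
        by (rule mult_left_mono) (use \<open>infdist p (line_ab a b) \<le> C/2\<close> in auto)
      thus ?thesis using vert_le[OF assms(2,3), of "of_int y" "of_int x" b] xy(1) by (metis order_trans)
    qed
    hence "\<bar>y - a*x - b\<bar> \<le> K" unfolding K_def by (simp add: mult.commute)
    hence "y \<in> {\<lceil>a*x + b - K\<rceil>..\<lfloor>a*x + b + K\<rfloor>}"
      by (simp add: ceiling_le_iff le_floor_iff abs_le_iff; linarith)
    thus "p \<in> (\<Union>x\<in>{0..<int w}. S x)" using xy unfolding S_def by (intro UN_I[of x]) auto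
  qed
  have cS: "real (card (S x)) \<le> 2*K+1" for x
  proof -
    have "card (S x) \<le> card {\<lceil>a*x + b - K\<rceil>..\<lfloor>a*x + b + K\<rfloor>}" unfolding S_def by (rule card_image_le) simp
    thus ?thesis using card_int_interval[of K "a*x+b"] \<open>C>0\<close> unfolding K_def by simp
  qed
  have fin: "finite (\<Union>x\<in>{0..<int w}. S x)" unfolding S_def by auto
  have "N (image_pts w h \<inter> strip (line_ab a b) C) \<le> card (\<Union>x\<in>{0..<int w}. S x)"
    unfolding N_def by (rule card_mono[OF fin sub])
  also have "\<dots> \<le> (\<Sum>x\<in>{0..<int w}. card (S x))" by (rule card_UN_le) simp
  finally have "real (N (image_pts w h \<inter> strip (line_ab a b) C)) \<le> (\<Sum>x\<in>{0..<int w}. real (card (S x)))"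
    by (metis of_nat_le_iff of_nat_sum)
  also have "\<dots> \<le> (\<Sum>x\<in>{0..<int w}. 2*K+1)" by (rule sum_mono) (rule cS)
  also have "\<dots> = (2*K+1) * real w" by simp
  also have "\<dots> \<le> (2 * C * sqrt 2 + 1) * real w"
    unfolding K_def using assms(1) by (intro mult_right_mono) auto
  finally show ?thesis .
qed

end
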